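(* Let $a,b,c,d$ be integers with $a\le c$ and $b\ge d$. Then $$\mathrm{gf}(a,b,c,d)=\prod_{j=1}^{c-a}\frac{\left(Xq^{j-1-2b+a}+Yq^{-j+1+2d-a}\right)\left(1-q^{2(b-d)+2j}\right)}{2\left(1-q^{2j}\right)}.$$ In particular, specializing $X=Y=1$, $$\mathrm{gf}(a,b,c,d)\big|_{X=Y=1}=2^{a-c}q^{\frac12(a-c)(a+c-1-4d)}\frac{(-q^{2a-2b-2d};q^2)_{c-a}\,(q^{2b-2d+2};q^2)_{c-a}}{(q^2;q^2)_{c-a}}.$$
   Context: $X,Y,q$ are indeterminates and $(u;p)_n=\prod_{j=0}^{n-1}(1-up^j)$. Consider lattice paths in $\mathbb Z\times\mathbb Z$ using unit steps to the right, $(s,t)\to(s+1,t)$, and downward, $(s,t)\to(s,t-1)$. A right step from $(s,t)$ to $(s+1,t)$ has weight $\frac{Xq^{s-2t}+Yq^{2t-s}}{2}$, a down step has weight $1$, and the weight of a path is the product of the weights of its steps. $\mathrm{gf}(a,b,c,d)$ denotes the sum of weights of all such paths from $(a,b)$ to $(c,d)$. *)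

theory Defs
  imports Complex_Main
begin

text \<open>A lattice path is encoded by its list of steps starting from a given point:
  True = right step (s,t) to (s+1,t), False = down step (s,t) to (s,t-1).\<close>

fun path_end :: "int \<times> int \<Rightarrow> bool list \<Rightarrow> int \<times> int" where
  "path_end (s,t) [] = (s,t)"
| "path_end (s,t) (True # ps) = path_end (s+1,t) ps"
| "path_end (s,t) (False # ps) = path_end (s,t-1) ps"

fun path_weight :: "'a::field \<Rightarrow> 'a \<Rightarrow> 'a \<Rightarrow> int \<times> int \<Rightarrow> bool list \<Rightarrow> 'a" where
  "path_weight X Y q (s,t) [] = 1"
| "path_weight X Y q (s,t) (True # ps) =
     (X * q powi (s - 2*t) + Y * q powi (2*t - s)) / 2 * path_weight X Y q (s+1,t) ps"
| "path_weight X Y q (s,t) (False # ps) = path_weight X Y q (s,t-1) ps"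

definition lattice_paths :: "int \<Rightarrow> int \<Rightarrow> int \<Rightarrow> int \<Rightarrow> bool list set" where
  "lattice_paths a b c d = {ps. path_end (a,b) ps = (c,d)}"

definition gf :: "'a::field \<Rightarrow> 'a \<Rightarrow> 'a \<Rightarrow> int \<Rightarrow> int \<Rightarrow> int \<Rightarrow> int \<Rightarrow> 'a" where
  "gf X Y q a b c d = (\<Sum>ps\<in>lattice_paths a b c d. path_weight X Y q (a,b) ps)"

definition qpoch :: "'a::comm_ring_1 \<Rightarrow> 'a \<Rightarrow> nat \<Rightarrow> 'a" where
  "qpoch u p n = (\<Prod>j<n. 1 - u * p ^ j)"

end

theory Submission
  imports Defs
begin

definition wt :: "'a::field \<Rightarrow> 'a \<Rightarrow> 'a \<Rightarrow> int \<Rightarrow> int \<Rightarrow> 'a" where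
  "wt X Y q s t = (X * q powi (s - 2*t) + Y * q powi (2*t - s)) / 2"

lemma path_end_snoc:
  "path_end st (ps @ [x]) = (if x then (fst (path_end st ps) + 1, snd (path_end st ps))
      else (fst (path_end st ps), snd (path_end st ps) - 1))"
proof (induction ps arbitrary: st)
  case Nil then show ?case by (cases st; cases x) auto
next
  case (Cons y ps) then show ?case by (cases st; cases y) auto
qed

lemma path_weight_snoc_T:
  "path_weight X Y q st (ps @ [True]) = path_weight X Y q st ps * wt X Y q (fst (path_end st ps)) (snd (path_end st ps))"
proof (induction ps arbitrary: st)
  case Nil then show ?case by (cases st) (auto simp: wt_def)
next
  case (Cons y ps) then show ?case by (cases st; cases y) (auto simp: mult.assoc)
qed

lemma path_weight_snoc_F:
  "path_weight X Y q st (ps @ [False]) = path_weight X Y q st ps"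
proof (induction ps arbitrary: st)
  case Nil then show ?case by (cases st) auto
next
  case (Cons y ps) then show ?case by (cases st; cases y) auto
qed

lemma path_end_count:
  "path_end (s,t) ps = (s + int (length (filter id ps)), t - int (length (filter Not ps)))"
proof (induction ps arbitrary: s t)
  case Nil then show ?case by simp
next
  case (Cons y ps) then show ?case by (cases y) auto
qed

lemma len_filter: "length (filter id ps) + length (filter Not ps) = length ps"
  by (induction ps) auto

lemma lp_length:
  assumes "ps \<in> lattice_paths a b c d"
  shows "int (length ps) = (c - a) + (b - d) \<and> a \<le> c \<and> d \<le> b"
  using assms path_end_count[of a b ps] len_filter[of ps]
  unfolding lattice_paths_def by auto

lemma lp_finite: "finite (lattice_paths a b c d)"
proof (rule finite_subset)
  show "lattice_paths a b c d \<subseteq> {xs. set xs \<subseteq> UNIV \<and> length xs = nat ((c - a) + (b - d))}"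
    using lp_length by fastforce
  show "finite {xs::bool list. set xs \<subseteq> UNIV \<and> length xs = nat ((c - a) + (b - d))}"
    by (rule finite_lists_length_eq) simp
qed

lemma lp_empty: "c < a \<or> b < d \<Longrightarrow> lattice_paths a b c d = {}"
  using lp_length by fastforce

lemma lp_base: "lattice_paths a b a b = {[]}"
proof -
  have "ps = []" if "ps \<in> lattice_paths a b a b" for ps
    using lp_length[OF that] by auto
  then show ?thesis by (auto simp: lattice_paths_def)
qed

lemma path_end_snoc_T: "path_end st (ps @ [True]) = (fst (path_end st ps) + 1, snd (path_end st ps))"
  by (simp add: path_end_snoc)

lemma path_end_snoc_F: "path_end st (ps @ [False]) = (fst (path_end st ps), snd (path_end st ps) - 1)"
  by (simp add: path_end_snoc)

lemma lp_split:
  assumes "(c,d) \<noteq> (a,b)"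
  shows "lattice_paths a b c d = (\<lambda>ps. ps@[False]) ` lattice_paths a b c (d+1)
           \<union> (\<lambda>ps. ps@[True]) ` lattice_paths a b (c-1) d"
proof
  show "lattice_paths a b c d \<subseteq> (\<lambda>ps. ps@[False]) ` lattice_paths a b c (d+1)
           \<union> (\<lambda>ps. ps@[True]) ` lattice_paths a b (c-1) d"
  proof
    fix ps assume ps: "ps \<in> lattice_paths a b c d"
    have "ps \<noteq> []" using ps assms by (auto simp: lattice_paths_def)
    then obtain xs x where e: "ps = xs @ [x]" by (metis append_butlast_last_id)
    show "ps \<in> (\<lambda>ps. ps@[False]) ` lattice_paths a b c (d+1)
           \<union> (\<lambda>ps. ps@[True]) ` lattice_paths a b (c-1) d"
    proof (cases x)
      case True
      obtain s t where st: "path_end (a,b) xs = (s,t)" by fastforce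
      have "path_end (a,b) (xs @ [True]) = (c,d)" using ps True e
        by (simp add: lattice_paths_def)
      then have "xs \<in> lattice_paths a b (c-1) d"
        using st by (simp add: path_end_snoc_T lattice_paths_def)
      then show ?thesis using True e by blast
    next
      case False
      obtain s t where st: "path_end (a,b) xs = (s,t)" by fastforce
      have "path_end (a,b) (xs @ [False]) = (c,d)" using ps False e
        by (simp add: lattice_paths_def)
      then have "xs \<in> lattice_paths a b c (d+1)"
        using st by (simp add: path_end_snoc_F lattice_paths_def)
      then show ?thesis using False e by blast
    qed
  qed
  show "(\<lambda>ps. ps@[False]) ` lattice_paths a b c (d+1)
           \<union> (\<lambda>ps. ps@[True]) ` lattice_paths a b (c-1) d \<subseteq> lattice_paths a b c d"
    by (auto simp: lattice_paths_def path_end_snoc_T path_end_snoc_F)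
qed

lemma gf_rec:
  assumes "(c,d) \<noteq> (a,b)"
  shows "gf X Y q a b c d = gf X Y q a b c (d+1) + wt X Y q (c-1) d * gf X Y q a b (c-1) d"
proof -
  have i1: "inj_on (\<lambda>ps. ps@[False]) A" for A :: "bool list set" by (auto simp: inj_on_def)
  have i2: "inj_on (\<lambda>ps. ps@[True]) A" for A :: "bool list set" by (auto simp: inj_on_def)
  have dj: "(\<lambda>ps. ps@[False]) ` lattice_paths a b c (d+1) \<inter> (\<lambda>ps. ps@[True]) ` lattice_paths a b (c-1) d = {}"
    by auto
  have "gf X Y q a b c d = (\<Sum>ps\<in>(\<lambda>ps. ps@[False]) ` lattice_paths a b c (d+1). path_weight X Y q (a,b) ps)
     + (\<Sum>ps\<in>(\<lambda>ps. ps@[True]) ` lattice_paths a b (c-1) d. path_weight X Y q (a,b) ps)"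
    unfolding gf_def lp_split[OF assms]
    by (rule sum.union_disjoint) (auto simp: lp_finite)
  also have "\<dots> = gf X Y q a b c (d+1) + wt X Y q (c-1) d * gf X Y q a b (c-1) d"
    unfolding gf_def sum.reindex[OF i1] sum.reindex[OF i2] sum_distrib_left o_def
  proof (rule arg_cong2[where f="(+)"])
    show "(\<Sum>x\<in>lattice_paths a b c (d + 1). path_weight X Y q (a, b) (x @ [False])) =
      (\<Sum>ps\<in>lattice_paths a b c (d + 1). path_weight X Y q (a, b) ps)"
      by (rule sum.cong[OF refl]) (simp only: path_weight_snoc_F)
    show "(\<Sum>x\<in>lattice_paths a b (c - 1) d. path_weight X Y q (a, b) (x @ [True])) =
      (\<Sum>ps\<in>lattice_paths a b (c - 1) d. wt X Y q (c - 1) d * path_weight X Y q (a, b) ps)"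
    proof (rule sum.cong[OF refl])
      fix x assume "x \<in> lattice_paths a b (c - 1) d"
      then have "path_end (a,b) x = (c-1,d)" by (simp add: lattice_paths_def)
      then show "path_weight X Y q (a, b) (x @ [True]) = wt X Y q (c - 1) d * path_weight X Y q (a, b) x"
        by (simp only: path_weight_snoc_T fst_conv snd_conv mult.commute)
    qed
  qed
  finally show ?thesis .
qed


definition alpha :: "'a::field \<Rightarrow> 'a \<Rightarrow> int \<Rightarrow> int \<Rightarrow> 'a" where
  "alpha X q a b = X * q powi (a - 2*b)"
definition beta :: "'a::field \<Rightarrow> 'a \<Rightarrow> int \<Rightarrow> int \<Rightarrow> 'a" where
  "beta Y q a d = Y * q powi (2*d - a)"
definition Kf :: "'a::field \<Rightarrow> nat \<Rightarrow> 'a" where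
  "Kf q n = (\<Prod>j<n. q powi (- int j))"
definition Cn :: "'a::field \<Rightarrow> nat \<Rightarrow> 'a" where
  "Cn q n = (\<Prod>j<n. 1 - (q^2)^(j+1))"
definition Rn :: "'a::field \<Rightarrow> nat \<Rightarrow> nat \<Rightarrow> 'a" where
  "Rn q m n = (\<Prod>j<n. 1 - (q^2)^(m+j+1))"
definition Bf :: "'a::field \<Rightarrow> 'a \<Rightarrow> 'a \<Rightarrow> int \<Rightarrow> int \<Rightarrow> int \<Rightarrow> nat \<Rightarrow> 'a" where
  "Bf X Y q a b d n = (\<Prod>j<n. alpha X q a b * (q^2)^j + beta Y q a d)"

lemma prod_shift:
  fixes al be P :: "'a::field"
  shows "(\<Prod>j<Suc n. al * P^j + be * P) = (al + be*P) * P^n * (\<Prod>j<n. al*P^j + be)"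
proof -
  have "(\<Prod>j<n. al*P^Suc j + be*P) = (\<Prod>j<n. P * (al*P^j+be))"
    by (simp add: algebra_simps)
  also have "\<dots> = P^n * (\<Prod>j<n. al*P^j+be)" by (simp add: prod.distrib)
  finally show ?thesis by (simp add: prod.lessThan_Suc_shift del: prod.lessThan_Suc)
qed

lemma Rn_shift: "Rn q m (Suc n) = (1 - (q^2)^(m+1)) * Rn q (Suc m) n"
  unfolding Rn_def by (simp add: prod.lessThan_Suc_shift del: prod.lessThan_Suc)

lemma alg:
  fixes K qn al be P Pi r :: "'a::field"
  shows "K*qn*((al + be*P)*P^n*Pi)*((1-P^(m+1))*r) + qn*(al*P^(n+Suc m)+be)*(1-P^(n+1))*(K*Pi*r)
     = K*qn*(Pi*(al*P^n+be))*(r*(1-P^(Suc m+n+1)))"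
  by (simp add: power_add algebra_simps)

lemma wt_fact:
  fixes X Y q :: "'a::field_char_0"
  assumes "q \<noteq> 0"
  shows "2 * wt X Y q (a + int n) (b - int k) = q powi (- int n) * (alpha X q a b * (q^2)^(n+k) + beta Y q a (b - int k))"
proof -
  have e1: "a + int n - 2*(b-int k) = -int n + ((a - 2*b) + int (2*(n+k)))" by simp
  have e2: "2*(b - int k) - (a + int n) = -int n + (2*(b - int k) - a)" by simp
  have "q powi (a + int n - 2*(b-int k)) = q powi (- int n) * (q powi (a - 2*b) * (q^2)^(n+k))"
    unfolding e1 by (simp only: power_int_add[OF disjI1[OF assms]] power_int_of_nat power_mult)
  moreover have "q powi (2*(b - int k) - (a + int n)) = q powi (- int n) * q powi (2*(b - int k) - a)"
    unfolding e2 by (simp only: power_int_add[OF disjI1[OF assms]])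
  ultimately show ?thesis unfolding wt_def alpha_def beta_def by (simp add: algebra_simps)
qed

lemma beta_shift:
  fixes q :: "'a::field"
  assumes "q \<noteq> 0"
  shows "beta Y q a (b - int m) = beta Y q a (b - int (Suc m)) * q^2"
proof -
  have e: "2*(b - int m) - a = (2*(b - int (Suc m)) - a) + 2" by simp
  show ?thesis unfolding beta_def e by (simp only: power_int_add[OF disjI1[OF assms]] power_int_numeral mult.assoc)
qed


lemma gf_zero_left: "c < a \<Longrightarrow> gf X Y q a b c d = 0"
  unfolding gf_def using lp_empty by auto

lemma gf_zero_below: "b < d \<Longrightarrow> gf X Y q a b c d = 0"
  unfolding gf_def using lp_empty by auto

lemma gf_col: "gf X Y q a b a (b - int m) = 1"
proof (induction m)
  case 0 then show ?case by (simp add: gf_def lp_base)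
next
  case (Suc m)
  have ne: "(a, b - int (Suc m)) \<noteq> (a, b)" by simp
  have e: "b - int (Suc m) + 1 = b - int m" by simp
  show ?case using gf_rec[OF ne, of X Y q] Suc by (simp only: e gf_zero_left[of "a-1" a] ) simp
qed

lemma main:
  fixes X Y q :: "'a::field_char_0"
  assumes q: "q \<noteq> 0"
  shows "gf X Y q a b (a + int n) (b - int m) * (2^n * Cn q n)
         = Kf q n * Bf X Y q a b (b - int m) n * Rn q m n"
proof (induction n arbitrary: m)
  case 0 then show ?case using gf_col by (simp add: Kf_def Cn_def Bf_def Rn_def)
next
  case (Suc n)
  note IHo = Suc
  show ?case
  proof (induction m)
    case 0
    have ne: "(a + int (Suc n), b) \<noteq> (a, b)" by simp
    have e1: "a + int (Suc n) - 1 = a + int n" by simp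
    have rec: "gf X Y q a b (a + int (Suc n)) b = wt X Y q (a + int n) b * gf X Y q a b (a + int n) b"
      using gf_rec[OF ne, of X Y q] gf_zero_below[of b "b+1"] by (simp only: e1) simp
    have w: "2 * wt X Y q (a + int n) b = q powi (- int n) * (alpha X q a b * (q^2)^n + beta Y q a b)"
      using wt_fact[OF q, of X Y a n b 0] by simp
    have IH: "gf X Y q a b (a + int n) b * (2^n * Cn q n) = Kf q n * Bf X Y q a b b n * Rn q 0 n"
      using IHo[of 0] by simp
    have RC: "Rn q 0 n = Cn q n" unfolding Rn_def Cn_def by simp
    have "gf X Y q a b (a + int (Suc n)) (b - int 0) * (2^Suc n * Cn q (Suc n))
        = (2 * wt X Y q (a + int n) b) * (1 - (q^2)^(n+1)) * (gf X Y q a b (a + int n) b * (2^n * Cn q n))"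
      using rec by (simp add: Cn_def algebra_simps)
    also have "\<dots> = Kf q (Suc n) * Bf X Y q a b (b - int 0) (Suc n) * Rn q 0 (Suc n)"
      unfolding w IH RC by (simp add: Kf_def Bf_def Cn_def Rn_def algebra_simps)
    finally show ?case .
  next
    case (Suc m)
    have ne: "(a + int (Suc n), b - int (Suc m)) \<noteq> (a, b)" by simp
    have e1: "a + int (Suc n) - 1 = a + int n" by simp
    have e2: "b - int (Suc m) + 1 = b - int m" by simp
    define G where "G = gf X Y q a b (a + int (Suc n)) (b - int (Suc m))"
    define G1 where "G1 = gf X Y q a b (a + int (Suc n)) (b - int m)"
    define G2 where "G2 = gf X Y q a b (a + int n) (b - int (Suc m))"
    define W where "W = wt X Y q (a + int n) (b - int (Suc m))"
    have rec: "G = G1 + W * G2"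
      using gf_rec[OF ne, of X Y q] unfolding G_def G1_def G2_def W_def by (simp only: e1 e2)
    define K where "K = Kf q n"
    define qn where "qn = q powi (- int n)"
    define al where "al = alpha X q a b"
    define be where "be = beta Y q a (b - int (Suc m))"
    define Pi where "Pi = Bf X Y q a b (b - int (Suc m)) n"
    define r where "r = Rn q (Suc m) n"
    define P where "P = (q^2)"
    have w: "2 * W = qn * (al * P^(n + Suc m) + be)"
      unfolding W_def qn_def al_def be_def P_def using wt_fact[OF q, of X Y a n b "Suc m"] by simp
    have IH2: "G2 * (2^n * Cn q n) = K * Pi * r"
      unfolding G2_def K_def Pi_def r_def using IHo[of "Suc m"] .
    have KS: "Kf q (Suc n) = K * qn" unfolding K_def qn_def Kf_def by simp
    have CS: "Cn q (Suc n) = Cn q n * (1 - P^(n+1))" unfolding Cn_def P_def by simp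
    have B1: "Bf X Y q a b (b - int m) (Suc n) = (al + be*P) * P^n * Pi"
      unfolding Bf_def Pi_def al_def be_def P_def beta_shift[OF q, of Y a b m]
      by (rule prod_shift)
    have R1: "Rn q m (Suc n) = (1 - P^(m+1)) * r" unfolding r_def P_def by (rule Rn_shift)
    have B2: "Bf X Y q a b (b - int (Suc m)) (Suc n) = Pi * (al * P^n + be)"
      unfolding Bf_def Pi_def al_def be_def P_def by simp
    have R2: "Rn q (Suc m) (Suc n) = r * (1 - P^(Suc m + n + 1))"
      unfolding Rn_def r_def P_def by simp
    have IH1: "G1 * (2^Suc n * Cn q (Suc n)) = K*qn*((al + be*P)*P^n*Pi)*((1-P^(m+1))*r)"
      using Suc unfolding G1_def KS B1 R1 .
    have "G * (2^Suc n * Cn q (Suc n)) = G1 * (2^Suc n * Cn q (Suc n))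
          + (2*W) * (1 - P^(n+1)) * (G2 * (2^n * Cn q n))"
      unfolding rec CS by (simp add: algebra_simps)
    also have "\<dots> = K*qn*(Pi*(al*P^n+be))*(r*(1-P^(Suc m+n+1)))"
      unfolding IH1 w IH2 by (rule alg)
    finally show ?case unfolding G_def KS B2 R2 by simp
  qed
qed


lemma Kf_powi:
  fixes q :: "'a::field"
  assumes "q \<noteq> 0"
  shows "Kf q n = q powi (- int (\<Sum>j<n. j))"
proof (induction n)
  case 0 then show ?case by (simp add: Kf_def)
next
  case (Suc n)
  have e: "- int (\<Sum>j<Suc n. j) = - int (\<Sum>j<n. j) + (- int n)" by simp
  show ?case using Suc unfolding Kf_def e
    by (simp only: prod.lessThan_Suc power_int_add[OF disjI1[OF assms]])
qed

lemma sum_lt2: "2 * int (\<Sum>j<n. j) = int n * (int n - 1)"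
  by (induction n) (auto simp: algebra_simps)

lemma int_reidx: "{1..int n} = (\<lambda>j. int j + 1) ` {..<n}"
proof
  show "{1..int n} \<subseteq> (\<lambda>j. int j + 1) ` {..<n}"
  proof
    fix x assume "x \<in> {1..int n}"
    then have "x = int (nat (x-1)) + 1 \<and> nat (x-1) < n" by auto
    then show "x \<in> (\<lambda>j. int j + 1) ` {..<n}" by blast
  qed
qed auto

theorem mainTheorem7:
  fixes X Y q :: "'a::field_char_0" and a b c d :: int
  assumes "a \<le> c" and "d \<le> b" and "q \<noteq> 0"
    and "\<forall>j\<in>{1..c-a}. 1 - q powi (2*j) \<noteq> 0"
  shows "gf X Y q a b c d =
           (\<Prod>j=1..c-a. (X * q powi (j-1-2*b+a) + Y * q powi (-j+1+2*d-a))
                          * (1 - q powi (2*(b-d)+2*j)) / (2 * (1 - q powi (2*j))))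
       \<and> gf 1 1 q a b c d =
           2 powi (a-c) * q powi (((a-c)*(a+c-1-4*d)) div 2)
           * qpoch (- (q powi (2*a-2*b-2*d))) (q^2) (nat (c-a))
           * qpoch (q powi (2*b-2*d+2)) (q^2) (nat (c-a))
           / qpoch (q^2) (q^2) (nat (c-a))"
proof -
  note q = assms(3)
  obtain n where cn: "c = a + int n" using assms(1) by (auto simp: zle_iff_zadd)
  obtain m where "b = d + int m" using assms(2) by (auto simp: zle_iff_zadd)
  then have dm: "d = b - int m" by simp
  have nn: "nat (c - a) = n" using cn by simp
  have Cnz: "Cn q n \<noteq> 0"
  proof -
    have "1 - (q^2)^(j+1) \<noteq> 0" if "j < n" for j
    proof -
      have "int j + 1 \<in> {1..c-a}" using that cn by auto
      then have "1 - q powi (2*(int j + 1)) \<noteq> 0" using assms(4) by blast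
      moreover have "2*(int j + 1) = int (2*(j+1))" by simp
      ultimately show ?thesis by (simp only: power_int_of_nat power_mult not_False_eq_True)
    qed
    then show ?thesis unfolding Cn_def by simp
  qed
  have G: "\<And>X Y. gf X Y q a b c d = Kf q n * Bf X Y q a b d n * Rn q m n / (2^n * Cn q n)"
    using main[OF q, of _ _ a b n m] Cnz unfolding cn dm by (simp add: eq_divide_eq)
  have part1: "gf X Y q a b c d =
           (\<Prod>j=1..c-a. (X * q powi (j-1-2*b+a) + Y * q powi (-j+1+2*d-a))
                          * (1 - q powi (2*(b-d)+2*j)) / (2 * (1 - q powi (2*j))))"
  proof -
    define F where "F = (\<lambda>j. (X * q powi (j-1-2*b+a) + Y * q powi (-j+1+2*d-a))
                          * (1 - q powi (2*(b-d)+2*j)) / (2 * (1 - q powi (2*j))))"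
    have inj: "inj_on (\<lambda>j::nat. int j + 1) {..<n}" by (auto simp: inj_on_def)
    have ca: "c - a = int n" using cn by simp
    have "(\<Prod>j=1..c-a. F j) = (\<Prod>j<n. F (int j + 1))"
      unfolding ca int_reidx prod.reindex[OF inj] by simp
    also have "\<dots> = (\<Prod>j<n. (q powi (- int j) * (alpha X q a b * (q^2)^j + beta Y q a d))
                   * (1 - (q^2)^(m+j+1)) / (2 * (1 - (q^2)^(j+1))))"
    proof (rule prod.cong[OF refl])
      fix j assume "j \<in> {..<n}"
      have e1: "int j + 1 - 1 - 2*b + a = - int j + ((a - 2*b) + int (2*j))" by simp
      have e2: "-(int j + 1) + 1 + 2*d - a = - int j + (2*d - a)" by simp
      have e3: "2*(b-d) + 2*(int j + 1) = int (2*(m+j+1))" using dm by simp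
      have e4: "2*(int j + 1) = int (2*(j+1))" by simp
      have h1: "q powi (int j + 1 - 1 - 2*b + a) = q powi (- int j) * (q powi (a - 2*b) * (q^2)^j)"
        unfolding e1 by (simp only: power_int_add[OF disjI1[OF q]] power_int_of_nat power_mult)
      have h2: "q powi (-(int j + 1) + 1 + 2*d - a) = q powi (- int j) * q powi (2*d - a)"
        unfolding e2 by (simp only: power_int_add[OF disjI1[OF q]])
      have h3: "q powi (2*(b-d) + 2*(int j + 1)) = (q^2)^(m+j+1)"
        unfolding e3 by (simp only: power_int_of_nat power_mult)
      have h4: "q powi (2*(int j + 1)) = (q^2)^(j+1)"
        unfolding e4 by (simp only: power_int_of_nat power_mult)
      show "F (int j + 1) = (q powi (- int j) * (alpha X q a b * (q^2)^j + beta Y q a d))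
                   * (1 - (q^2)^(m+j+1)) / (2 * (1 - (q^2)^(j+1)))"
        unfolding F_def h1 h2 h3 h4 alpha_def beta_def by (simp add: algebra_simps)
    qed
    also have "\<dots> = Kf q n * Bf X Y q a b d n * Rn q m n / (2^n * Cn q n)"
      unfolding Kf_def Bf_def Rn_def Cn_def
      by (simp only: prod_dividef prod.distrib prod_constant card_lessThan)
    finally show ?thesis unfolding F_def G by (rule sym)
  qed
  have part2: "gf 1 1 q a b c d =
           2 powi (a-c) * q powi (((a-c)*(a+c-1-4*d)) div 2)
           * qpoch (- (q powi (2*a-2*b-2*d))) (q^2) (nat (c-a))
           * qpoch (q powi (2*b-2*d+2)) (q^2) (nat (c-a))
           / qpoch (q^2) (q^2) (nat (c-a))"
  proof -
    define E where "E = - int (\<Sum>j<n. j) + int n * (2*d - a)"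
    have E2: "((a-c)*(a+c-1-4*d)) div 2 = E"
    proof -
      have "(a-c)*(a+c-1-4*d) = 2 * E" unfolding E_def cn
        using sum_lt2[of n] by (simp add: algebra_simps)
      then show ?thesis by simp
    qed
    have Q1: "qpoch (q^2) (q^2) n = Cn q n" unfolding qpoch_def Cn_def
      by (simp add: power_Suc2 mult.commute)
    have e5: "2*b - 2*d + 2 = int (2*(m+1))" using dm by simp
    have Q2: "qpoch (q powi (2*b-2*d+2)) (q^2) n = Rn q m n" unfolding qpoch_def Rn_def e5
      by (simp only: power_int_of_nat power_mult power_add) (simp add: ac_simps)
    have e6: "2*a - 2*b - 2*d = (a - 2*b) - (2*d - a)" by simp
    have B: "Bf 1 1 q a b d n = (q powi (2*d - a))^n * qpoch (- (q powi (2*a-2*b-2*d))) (q^2) n"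
    proof -
      have "Bf 1 1 q a b d n = (\<Prod>j<n. q powi (2*d - a) * (1 + q powi (2*a-2*b-2*d) * (q^2)^j))"
      proof -
        have vz: "q powi (2*d - a) \<noteq> 0" using q by simp
        show ?thesis
        unfolding Bf_def alpha_def beta_def e6 power_int_diff[OF disjI1[OF q], of "a - 2*b" "2*d-a"]
        by (rule prod.cong[OF refl]) (use vz in \<open>simp add: field_simps\<close>)
      qed
      then show ?thesis unfolding qpoch_def by (simp add: prod.distrib)
    qed
    have KE: "Kf q n * (q powi (2*d - a))^n = q powi E"
      unfolding Kf_powi[OF q] E_def
      by (simp only: power_int_add[OF disjI1[OF q]] power_int_mult[symmetric] power_int_of_nat[symmetric]) 
         (simp add: mult.commute)
    have P2: "2 powi (a - c) = (1::'a) / 2^n" unfolding cn by (simp add: power_int_minus_divide)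
    show ?thesis unfolding nn G Q1 Q2 E2 P2 B
      using KE[symmetric] by (simp add: field_simps)
  qed
  show ?thesis using part1 part2 by blast
qed

end
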